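(* Let the loss $f(\cdot;z)$ be convex and $\beta$-smooth for all $z$, and let $\eta_t\le1/(2\beta)$ for all $t$. Then the expected path error of full-batch GD after $T$ iterations satisfies $$\epsilon_{\mathrm{path}}\le4\beta\,\mathbb{E}[\|W_1-W^*_S\|_2^2]+8\beta\,\mathbb{E}[R_S(W^*_S)]\sum_{t=1}^T\eta_t .$$
   Context: Let $\mathcal{D}$ be a distribution on $\mathcal{Z}$ and $z_1,\dots,z_n$ i.i.d. from $\mathcal{D}$; $S=(z_1,\dots,z_n)$. The loss $f:\mathbb{R}^d\times\mathcal{Z}\to[0,\infty)$ is non-negative; $\beta$-smooth means $\|\nabla f(w,z)-\nabla f(u,z)\|_2\le\beta\|w-u\|_2$. $R_S(w)=\frac1n\sum_j f(w,z_j)$ with minimizer $W^*_S$ (assumed to exist). Full-batch GD: from a fixed $W_1$, $W_{t+1}=W_t-\frac{\eta_t}{n}\sum_{j=1}^n\nabla f(W_t,z_j)$, $t=1,\dots,T$. Expected path error $\epsilon_{\mathrm{path}}=\sum_{t=1}^T\eta_t\mathbb{E}[\|\nabla f(W_t,z_i)\|_2^2]$ for a fixed index $i$. *)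

theory Defs
  imports "HOL-Probability.Probability"
begin

definition emp_risk :: "('a \<Rightarrow> 'z \<Rightarrow> real) \<Rightarrow> nat \<Rightarrow> (nat \<Rightarrow> 'z) \<Rightarrow> 'a \<Rightarrow> real" where
  "emp_risk f n S w = (\<Sum>j<n. f w (S j)) / real n"

text \<open>Full-batch GD: gd_aux ... k is the iterate W_(k+1);
  W_(k+2) = W_(k+1) - (eta_(k+1) / n) * sum_j grad f(W_(k+1), z_j).\<close>
primrec gd_aux :: "('a::real_vector \<Rightarrow> 'z \<Rightarrow> 'a) \<Rightarrow> (nat \<Rightarrow> real) \<Rightarrow> nat \<Rightarrow> 'a \<Rightarrow> (nat \<Rightarrow> 'z) \<Rightarrow> nat \<Rightarrow> 'a" where
  "gd_aux g eta n W1 S 0 = W1"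
| "gd_aux g eta n W1 S (Suc k) =
     gd_aux g eta n W1 S k - (eta (Suc k) / real n) *\<^sub>R (\<Sum>j<n. g (gd_aux g eta n W1 S k) (S j))"

definition gd_iter :: "('a::real_vector \<Rightarrow> 'z \<Rightarrow> 'a) \<Rightarrow> (nat \<Rightarrow> real) \<Rightarrow> nat \<Rightarrow> 'a \<Rightarrow> (nat \<Rightarrow> 'z) \<Rightarrow> nat \<Rightarrow> 'a" where
  "gd_iter g eta n W1 S t = gd_aux g eta n W1 S (t - 1)"

end

theory Submission
  imports Defs
begin

lemma line_deriv:
  fixes f :: "'a::euclidean_space \<Rightarrow> real"
  assumes grad: "\<And>w. (f has_derivative (\<lambda>h. g w \<bullet> h)) (at w)"
  shows "((\<lambda>s. f (x + s *\<^sub>R d)) has_real_derivative (g (x + s *\<^sub>R d) \<bullet> d)) (at s)"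
proof -
  have l: "((\<lambda>s. x + s *\<^sub>R d) has_derivative (\<lambda>h. h *\<^sub>R d)) (at s)"
    by (auto intro!: derivative_eq_intros)
  have "((\<lambda>s. f (x + s *\<^sub>R d)) has_derivative (\<lambda>h. g (x + s *\<^sub>R d) \<bullet> (h *\<^sub>R d))) (at s)"
    using has_derivative_compose[OF l grad] by (simp add: o_def)
  moreover have "(\<lambda>h. g (x + s *\<^sub>R d) \<bullet> (h *\<^sub>R d)) = (*) (g (x + s *\<^sub>R d) \<bullet> d)"
    by (auto simp: fun_eq_iff)
  ultimately show ?thesis by (simp add: has_field_derivative_def)
qed

lemma descent:
  fixes f :: "'a::euclidean_space \<Rightarrow> real"
  assumes grad: "\<And>w. (f has_derivative (\<lambda>h. g w \<bullet> h)) (at w)"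
    and smooth: "\<And>w u. norm (g w - g u) \<le> \<beta> * norm (w - u)"
  shows "f y \<le> f x + g x \<bullet> (y - x) + \<beta> / 2 * (norm (y - x))\<^sup>2"
proof -
  define d where "d = y - x"
  define \<phi> where "\<phi> s = f (x + s *\<^sub>R d) - s * (g x \<bullet> d) - \<beta> / 2 * s\<^sup>2 * (norm d)\<^sup>2" for s
  have "\<phi> 1 \<le> \<phi> 0"
  proof (rule DERIV_nonpos_imp_nonincreasing[of 0 1])
    fix s :: real assume s0: "0 \<le> s" and s1: "s \<le> 1"
    have s: "0 \<le> s \<and> s \<le> 1" using s0 s1 by simp
    have D: "(\<phi> has_real_derivative (g (x + s *\<^sub>R d) \<bullet> d - g x \<bullet> d - \<beta> * s * (norm d)\<^sup>2)) (at s)"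
      unfolding \<phi>_def
      by (rule derivative_eq_intros line_deriv[OF grad] refl | simp)+
    have "g (x + s *\<^sub>R d) \<bullet> d - g x \<bullet> d = (g (x + s *\<^sub>R d) - g x) \<bullet> d" by (simp add: inner_diff_left)
    also have "\<dots> \<le> norm (g (x + s *\<^sub>R d) - g x) * norm d" by (rule norm_cauchy_schwarz)
    also have "\<dots> \<le> \<beta> * norm (s *\<^sub>R d) * norm d"
      using smooth[of "x + s *\<^sub>R d" x] by (simp add: mult_right_mono)
    also have "\<dots> = \<beta> * s * (norm d)\<^sup>2" using s by (simp add: power2_eq_square)
    finally have le: "g (x + s *\<^sub>R d) \<bullet> d - g x \<bullet> d - \<beta> * s * (norm d)\<^sup>2 \<le> 0" by simp
    show "\<exists>y. (\<phi> has_real_derivative y) (at s) \<and> y \<le> 0" using D le by blast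
  qed simp
  then show ?thesis by (simp add: \<phi>_def d_def algebra_simps)
qed

lemma tangent:
  fixes f :: "'a::euclidean_space \<Rightarrow> real"
  assumes grad: "\<And>w. (f has_derivative (\<lambda>h. g w \<bullet> h)) (at w)"
    and cvx: "convex_on UNIV f"
  shows "f x + g x \<bullet> (y - x) \<le> f y"
proof -
  define d where "d = y - x"
  have c: "convex_on UNIV (\<lambda>s::real. f (x + s *\<^sub>R d))"
  proof (rule convex_onI)
    fix t s r :: real assume "0 < t" "t < 1"
    have "x + ((1 - t) *\<^sub>R s + t *\<^sub>R r) *\<^sub>R d = (1 - t) *\<^sub>R (x + s *\<^sub>R d) + t *\<^sub>R (x + r *\<^sub>R d)"
      by (simp add: algebra_simps)
    then show "f (x + ((1 - t) *\<^sub>R s + t *\<^sub>R r) *\<^sub>R d) \<le> (1 - t) * f (x + s *\<^sub>R d) + t * f (x + r *\<^sub>R d)"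
      using convex_onD[OF cvx, of t "x + s *\<^sub>R d" "x + r *\<^sub>R d"] \<open>0 < t\<close> \<open>t < 1\<close> by simp
  qed simp
  have "f (x + 1 *\<^sub>R d) - f (x + 0 *\<^sub>R d) \<ge> (g (x + 0 *\<^sub>R d) \<bullet> d) * (1 - 0)"
    by (rule convex_on_imp_above_tangent[OF c]) (use line_deriv[OF grad, of x d 0] in \<open>auto intro: has_field_derivative_at_within\<close>)
  then show ?thesis by (simp add: d_def)
qed


lemma self_bound:
  fixes f :: "'a::euclidean_space \<Rightarrow> real"
  assumes grad: "\<And>w. (f has_derivative (\<lambda>h. g w \<bullet> h)) (at w)"
    and smooth: "\<And>w u. norm (g w - g u) \<le> \<beta> * norm (w - u)"
    and nn: "\<And>w. f w \<ge> 0" and b: "\<beta> > 0"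
  shows "(norm (g x))\<^sup>2 \<le> 2 * \<beta> * f x"
proof -
  have "f (x - (1/\<beta>) *\<^sub>R g x) \<le> f x + g x \<bullet> ((x - (1/\<beta>) *\<^sub>R g x) - x) + \<beta> / 2 * (norm ((x - (1/\<beta>) *\<^sub>R g x) - x))\<^sup>2"
    by (rule descent[OF grad smooth])
  also have "\<dots> = f x - (norm (g x))\<^sup>2 / (2 * \<beta>)"
    using b by (simp add: dot_square_norm field_simps power2_eq_square)
  finally have "0 \<le> f x - (norm (g x))\<^sup>2 / (2 * \<beta>)" using nn[of "x - (1/\<beta>) *\<^sub>R g x"] by linarith
  then show ?thesis using b by (simp add: field_simps)
qed

locale gdS =
  fixes f :: "'a::euclidean_space \<Rightarrow> 'z \<Rightarrow> real" and gradf :: "'a \<Rightarrow> 'z \<Rightarrow> 'a"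
    and \<beta> :: real and n :: nat and S :: "nat \<Rightarrow> 'z" and ws :: 'a
  assumes grad: "\<And>w z. ((\<lambda>u. f u z) has_derivative (\<lambda>h. gradf w z \<bullet> h)) (at w)"
    and convex: "\<And>z. convex_on UNIV (\<lambda>w. f w z)"
    and beta_pos: "\<beta> > 0"
    and smooth: "\<And>w u z. norm (gradf w z - gradf u z) \<le> \<beta> * norm (w - u)"
    and npos: "n > 0"
    and wmin: "\<And>w. emp_risk f n S ws \<le> emp_risk f n S w"
begin

definition R where "R w = emp_risk f n S w"
definition G where "G w = (1 / real n) *\<^sub>R (\<Sum>j<n. gradf w (S j))"

lemma L1: "R y \<le> R x + G x \<bullet> (y - x) + \<beta> / 2 * (norm (y - x))\<^sup>2"
proof -
  have "(\<Sum>j<n. f y (S j)) \<le> (\<Sum>j<n. f x (S j) + gradf x (S j) \<bullet> (y - x) + \<beta> / 2 * (norm (y - x))\<^sup>2)"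
    by (rule sum_mono) (rule descent[OF grad smooth])
  also have "\<dots> = (\<Sum>j<n. f x (S j)) + (\<Sum>j<n. gradf x (S j)) \<bullet> (y - x) + real n * (\<beta> / 2 * (norm (y - x))\<^sup>2)"
    by (simp add: sum.distrib inner_sum_left)
  finally show ?thesis using npos
    by (simp add: R_def G_def emp_risk_def field_simps)
qed

lemma L2: "R x + G x \<bullet> (y - x) \<le> R y"
proof -
  have "(\<Sum>j<n. f x (S j) + gradf x (S j) \<bullet> (y - x)) \<le> (\<Sum>j<n. f y (S j))"
    by (rule sum_mono) (rule tangent[OF grad convex])
  then have "(\<Sum>j<n. f x (S j)) + (\<Sum>j<n. gradf x (S j)) \<bullet> (y - x) \<le> (\<Sum>j<n. f y (S j))"
    by (simp add: sum.distrib inner_sum_left)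
  then have "((\<Sum>j<n. f x (S j)) + (\<Sum>j<n. gradf x (S j)) \<bullet> (y - x)) / real n \<le> (\<Sum>j<n. f y (S j)) / real n"
    by (rule divide_right_mono) simp
  moreover have "R x + G x \<bullet> (y - x) = ((\<Sum>j<n. f x (S j)) + (\<Sum>j<n. gradf x (S j)) \<bullet> (y - x)) / real n"
    by (simp add: R_def G_def emp_risk_def add_divide_distrib)
  ultimately show ?thesis by (simp add: R_def emp_risk_def)
qed

lemma L3: "(norm (G x))\<^sup>2 \<le> 2 * \<beta> * (R x - R ws)"
proof -
  have "R ws \<le> R (x - (1/\<beta>) *\<^sub>R G x)" using wmin by (simp add: R_def)
  also have "\<dots> \<le> R x + G x \<bullet> ((x - (1/\<beta>) *\<^sub>R G x) - x) + \<beta> / 2 * (norm ((x - (1/\<beta>) *\<^sub>R G x) - x))\<^sup>2"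
    by (rule L1)
  also have "\<dots> = R x - (norm (G x))\<^sup>2 / (2 * \<beta>)"
    using beta_pos by (simp add: dot_square_norm field_simps power2_eq_square)
  finally show ?thesis using beta_pos by (simp add: field_simps)
qed

lemma L4:
  assumes e0: "0 \<le> e" and e1: "e \<le> 1 / (2 * \<beta>)"
  shows "(norm (x - e *\<^sub>R G x - ws))\<^sup>2 \<le> (norm (x - ws))\<^sup>2 - e * (R x - R ws)"
proof -
  have eq: "(norm (x - e *\<^sub>R G x - ws))\<^sup>2 = (norm (x - ws))\<^sup>2 - 2 * e * (G x \<bullet> (x - ws)) + e\<^sup>2 * (norm (G x))\<^sup>2"
  proof -
    have h: "x - e *\<^sub>R G x - ws = (x - ws) - e *\<^sub>R G x" by simp
    have n1: "(norm ((x - ws) - e *\<^sub>R G x))\<^sup>2 = (norm (x - ws))\<^sup>2 + (norm (e *\<^sub>R G x))\<^sup>2 - 2 * ((x - ws) \<bullet> (e *\<^sub>R G x))"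
      using dot_norm_neg[of "x - ws" "e *\<^sub>R G x"] by (simp add: field_simps)
    have n2: "(norm (e *\<^sub>R G x))\<^sup>2 = e\<^sup>2 * (norm (G x))\<^sup>2" by (simp add: power_mult_distrib)
    have n3: "(x - ws) \<bullet> (e *\<^sub>R G x) = e * (G x \<bullet> (x - ws))" by (simp add: inner_commute)
    show ?thesis unfolding h n1 n2 n3 by (simp add: algebra_simps)
  qed
  have a: "R x - R ws \<le> G x \<bullet> (x - ws)"
    using L2[of x ws] by (simp add: inner_diff_right)
  have nn: "0 \<le> R x - R ws" using wmin by (simp add: R_def)
  have b: "e\<^sup>2 * (norm (G x))\<^sup>2 \<le> e\<^sup>2 * (2 * \<beta> * (R x - R ws))"
    by (rule mult_left_mono[OF L3]) simp
  have "e * (2 * \<beta>) \<le> 1" using e1 beta_pos by (simp add: field_simps)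
  then have c0: "(e * (2 * \<beta>)) * (e * (R x - R ws)) \<le> 1 * (e * (R x - R ws))"
    by (rule mult_right_mono) (use e0 nn in simp)
  have ceq: "e\<^sup>2 * (2 * \<beta> * (R x - R ws)) = (e * (2 * \<beta>)) * (e * (R x - R ws))"
    by (simp add: power2_eq_square)
  have c: "e\<^sup>2 * (2 * \<beta> * (R x - R ws)) \<le> e * (R x - R ws)"
    using c0 ceq by linarith
  have d: "2 * e * (R x - R ws) \<le> 2 * e * (G x \<bullet> (x - ws))"
    using a e0 by (simp add: mult_left_mono)
  show ?thesis using eq b c d by linarith
qed

lemma gd_step: "gd_aux gradf eta n W1 S (Suc k) = gd_aux gradf eta n W1 S k - eta (Suc k) *\<^sub>R G (gd_aux gradf eta n W1 S k)"
  by (simp add: G_def)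

lemma telescope:
  assumes e0: "\<And>t. 0 \<le> eta t" and e1: "\<And>t. eta t \<le> 1 / (2 * \<beta>)"
  shows "(\<Sum>t=1..T. eta t * (R (gd_aux gradf eta n W1 S (t - 1)) - R ws)) + (norm (gd_aux gradf eta n W1 S T - ws))\<^sup>2
         \<le> (norm (W1 - ws))\<^sup>2"
proof (induction T)
  case 0
  then show ?case by simp
next
  case (Suc T)
  have "(norm (gd_aux gradf eta n W1 S (Suc T) - ws))\<^sup>2 \<le> (norm (gd_aux gradf eta n W1 S T - ws))\<^sup>2 - eta (Suc T) * (R (gd_aux gradf eta n W1 S T) - R ws)"
    unfolding gd_step by (rule L4[OF e0 e1])
  then show ?case using Suc.IH by simp
qed

lemma final:
  assumes e0: "\<And>t. 0 \<le> eta t" and e1: "\<And>t. eta t \<le> 1 / (2 * \<beta>)"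
  shows "(\<Sum>t=1..T. eta t * R (gd_iter gradf eta n W1 S t)) \<le> (norm (W1 - ws))\<^sup>2 + R ws * (\<Sum>t=1..T. eta t)"
proof -
  have "(\<Sum>t=1..T. eta t * (R (gd_aux gradf eta n W1 S (t - 1)) - R ws)) \<le> (norm (W1 - ws))\<^sup>2"
  proof -
    have "(\<Sum>t=1..T. eta t * (R (gd_aux gradf eta n W1 S (t - 1)) - R ws)) + (norm (gd_aux gradf eta n W1 S T - ws))\<^sup>2
         \<le> (norm (W1 - ws))\<^sup>2" by (rule telescope[OF e0 e1])
    then show ?thesis by (smt (verit) zero_le_power2)
  qed
  then show ?thesis
    by (simp add: gd_iter_def right_diff_distrib sum_subtractf sum_distrib_left mult.commute)
qed

end

lemma meas_comp2:
  assumes h: "(\<lambda>(w, z). h w z) \<in> borel_measurable (borel \<Otimes>\<^sub>M D)"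
    and X: "X \<in> borel_measurable (PiM {..<n} (\<lambda>_. D))" and j: "j < n"
  shows "(\<lambda>S. h (X S) (S j)) \<in> borel_measurable (PiM {..<n} (\<lambda>_. D))"
proof -
  have "(\<lambda>S. (X S, S j)) \<in> measurable (PiM {..<n} (\<lambda>_. D)) (borel \<Otimes>\<^sub>M D)"
    using j by (intro measurable_Pair X) (auto intro: measurable_component_singleton)
  from measurable_compose[OF this h] show ?thesis by simp
qed

lemma gd_meas:
  fixes gradf :: "'a::euclidean_space \<Rightarrow> 'z \<Rightarrow> 'a"
  assumes g: "(\<lambda>(w, z). gradf w z) \<in> borel_measurable (borel \<Otimes>\<^sub>M D)"
  shows "(\<lambda>S. gd_aux gradf eta n W1 S k) \<in> borel_measurable (PiM {..<n} (\<lambda>_. D))"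
proof (induction k)
  case 0
  then show ?case by simp
next
  case (Suc k)
  have "(\<lambda>S. \<Sum>j<n. gradf (gd_aux gradf eta n W1 S k) (S j)) \<in> borel_measurable (PiM {..<n} (\<lambda>_. D))"
    by (intro borel_measurable_sum meas_comp2[OF g Suc.IH]) simp
  then show ?case using Suc.IH by simp
qed

lemma gd_aux_perm:
  assumes b: "bij_betw \<sigma> {..<n} {..<n}" and S': "\<And>k. k < n \<Longrightarrow> S' k = S (\<sigma> k)"
  shows "gd_aux g eta n W1 S' k = gd_aux g eta n W1 S k"
proof (induction k)
  case 0
  then show ?case by simp
next
  case (Suc k)
  have "(\<Sum>j<n. g w (S' j)) = (\<Sum>j<n. g w (S j))" for w
  proof -
    have "(\<Sum>j<n. g w (S' j)) = (\<Sum>j<n. g w (S (\<sigma> j)))" by (rule sum.cong) (auto simp: S')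
    also have "\<dots> = (\<Sum>j<n. g w (S j))" by (rule sum.reindex_bij_betw[OF b])
    finally show ?thesis .
  qed
  then show ?case using Suc.IH by simp
qed

definition swp :: "nat \<Rightarrow> nat \<Rightarrow> nat \<Rightarrow> nat" where
  "swp i j k = (if k = i then j else if k = j then i else k)"

lemma swp_bij: "i < n \<Longrightarrow> j < n \<Longrightarrow> bij_betw (swp i j) {..<n} {..<n}"
  by (rule bij_betwI[where g="swp i j"]) (auto simp: swp_def)

lemma sym_int:
  fixes F :: "(nat \<Rightarrow> 'z) \<Rightarrow> ennreal"
  assumes D: "prob_space D" and i: "i < n" and j: "j < n"
    and F: "F \<in> borel_measurable (PiM {..<n} (\<lambda>_. D))"
  shows "(\<integral>\<^sup>+ S. F S \<partial>(PiM {..<n} (\<lambda>_. D))) = (\<integral>\<^sup>+ S. F (\<lambda>k\<in>{..<n}. S (swp i j k)) \<partial>(PiM {..<n} (\<lambda>_. D)))"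
proof -
  let ?P = "PiM {..<n} (\<lambda>_. D)"
  have dist: "distr ?P ?P (\<lambda>S. \<lambda>k\<in>{..<n}. S (swp i j k)) = ?P"
    using distr_PiM_reindex[of "{..<n}" "\<lambda>_. D" "swp i j" "{..<n}"] D i j swp_bij[OF i j]
    by (auto simp: bij_betw_def)
  have m: "(\<lambda>S. \<lambda>k\<in>{..<n}. S (swp i j k)) \<in> measurable ?P ?P"
    using i j by (auto intro!: measurable_restrict measurable_component_singleton simp: swp_def)
  have "(\<integral>\<^sup>+ S. F S \<partial>?P) = (\<integral>\<^sup>+ S. F S \<partial>(distr ?P ?P (\<lambda>S. \<lambda>k\<in>{..<n}. S (swp i j k))))"
    by (simp only: dist)
  also have "\<dots> = (\<integral>\<^sup>+ S. F (\<lambda>k\<in>{..<n}. S (swp i j k)) \<partial>?P)"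
    by (rule nn_integral_distr[OF m]) (simp add: dist F)
  finally show ?thesis .
qed


theorem lemma20:
  fixes D :: "'z measure"
    and f :: "'a::euclidean_space \<Rightarrow> 'z \<Rightarrow> real"
    and gradf :: "'a \<Rightarrow> 'z \<Rightarrow> 'a"
    and \<beta> :: real and eta :: "nat \<Rightarrow> real"
    and n T i :: nat and W1 :: 'a
    and Wstar :: "(nat \<Rightarrow> 'z) \<Rightarrow> 'a"
  assumes D: "prob_space D"
    and i: "i < n"
    and f_nonneg: "\<And>w z. f w z \<ge> 0"
    and f_meas: "(\<lambda>(w, z). f w z) \<in> borel_measurable (borel \<Otimes>\<^sub>M D)"
    and grad: "\<And>w z. ((\<lambda>u. f u z) has_derivative (\<lambda>h. gradf w z \<bullet> h)) (at w)"
    and grad_meas: "(\<lambda>(w, z). gradf w z) \<in> borel_measurable (borel \<Otimes>\<^sub>M D)"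
    and convex: "\<And>z. convex_on UNIV (\<lambda>w. f w z)"
    and beta_pos: "\<beta> > 0"
    and smooth: "\<And>w u z. norm (gradf w z - gradf u z) \<le> \<beta> * norm (w - u)"
    and eta_nonneg: "\<And>t. eta t \<ge> 0"
    and eta_le: "\<And>t. eta t \<le> 1 / (2 * \<beta>)"
    and Wstar_min: "\<And>S w. S \<in> space (PiM {..<n} (\<lambda>_. D)) \<Longrightarrow>
                      emp_risk f n S (Wstar S) \<le> emp_risk f n S w"
    and Wstar_meas: "Wstar \<in> borel_measurable (PiM {..<n} (\<lambda>_. D))"
  shows "(\<Sum>t=1..T. ennreal (eta t) *
            (\<integral>\<^sup>+ S. ennreal ((norm (gradf (gd_iter gradf eta n W1 S t) (S i)))\<^sup>2)
               \<partial>(PiM {..<n} (\<lambda>_. D))))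
         \<le> ennreal (4 * \<beta>) * (\<integral>\<^sup>+ S. ennreal ((norm (W1 - Wstar S))\<^sup>2) \<partial>(PiM {..<n} (\<lambda>_. D)))
           + ennreal (8 * \<beta>) * (\<integral>\<^sup>+ S. ennreal (emp_risk f n S (Wstar S)) \<partial>(PiM {..<n} (\<lambda>_. D)))
             * ennreal (\<Sum>t=1..T. eta t)"
proof -
  let ?P = "PiM {..<n} (\<lambda>_. D)"
  define W where "W t S = gd_iter gradf eta n W1 S t" for t S
  define Rt where "Rt t S = emp_risk f n S (W t S)" for t S
  have npos: "n > 0" using i by simp
  have Wm: "(\<lambda>S. W t S) \<in> borel_measurable ?P" for t
    unfolding W_def gd_iter_def by (rule gd_meas[OF grad_meas])
  have fm: "(\<lambda>S. f (X S) (S j)) \<in> borel_measurable ?P" if "X \<in> borel_measurable ?P" "j < n" for X j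
    by (rule meas_comp2[OF f_meas that])
  have Rm: "(\<lambda>S. emp_risk f n S (X S)) \<in> borel_measurable ?P" if "X \<in> borel_measurable ?P" for X
    unfolding emp_risk_def by (intro borel_measurable_divide borel_measurable_sum fm[OF that] borel_measurable_const) auto
  have Rnn: "0 \<le> emp_risk f n S w" for S w
    unfolding emp_risk_def by (intro divide_nonneg_nonneg sum_nonneg f_nonneg) auto
  have sym: "(\<integral>\<^sup>+ S. ennreal (f (W t S) (S i)) \<partial>?P) = (\<integral>\<^sup>+ S. ennreal (f (W t S) (S j)) \<partial>?P)"
    if j: "j < n" for t j
  proof -
    have "(\<integral>\<^sup>+ S. ennreal (f (W t S) (S i)) \<partial>?P)
        = (\<integral>\<^sup>+ S. ennreal (f (W t (\<lambda>k\<in>{..<n}. S (swp i j k))) ((\<lambda>k\<in>{..<n}. S (swp i j k)) i)) \<partial>?P)"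
      by (rule sym_int[OF D i j, where F="\<lambda>S. ennreal (f (W t S) (S i))"]) (rule measurable_compose[OF fm[OF Wm i] measurable_ennreal])
    also have "\<dots> = (\<integral>\<^sup>+ S. ennreal (f (W t S) (S j)) \<partial>?P)"
    proof (rule nn_integral_cong)
      fix S
      have "W t (\<lambda>k\<in>{..<n}. S (swp i j k)) = W t S"
        unfolding W_def gd_iter_def by (rule gd_aux_perm[OF swp_bij[OF i j]]) simp
      then show "ennreal (f (W t (\<lambda>k\<in>{..<n}. S (swp i j k))) ((\<lambda>k\<in>{..<n}. S (swp i j k)) i)) = ennreal (f (W t S) (S j))"
        using i by (simp add: swp_def)
    qed
    finally show ?thesis .
  qed
  have avg: "(\<integral>\<^sup>+ S. ennreal (Rt t S) \<partial>?P) = (\<integral>\<^sup>+ S. ennreal (f (W t S) (S i)) \<partial>?P)" for t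
  proof -
    have "(\<integral>\<^sup>+ S. ennreal (Rt t S) \<partial>?P) = (\<integral>\<^sup>+ S. ennreal (1 / real n) * (\<Sum>j<n. ennreal (f (W t S) (S j))) \<partial>?P)"
    proof (rule nn_integral_cong)
      fix S
      have "ennreal (Rt t S) = ennreal (1 / real n * (\<Sum>j<n. f (W t S) (S j)))"
        by (simp add: Rt_def emp_risk_def)
      also have "\<dots> = ennreal (1 / real n) * ennreal (\<Sum>j<n. f (W t S) (S j))"
        by (rule ennreal_mult) (auto intro: sum_nonneg f_nonneg)
      also have "\<dots> = ennreal (1 / real n) * (\<Sum>j<n. ennreal (f (W t S) (S j)))"
        by (simp add: f_nonneg)
      finally show "ennreal (Rt t S) = ennreal (1 / real n) * (\<Sum>j<n. ennreal (f (W t S) (S j)))" .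
    qed
    also have "\<dots> = ennreal (1 / real n) * (\<Sum>j<n. (\<integral>\<^sup>+ S. ennreal (f (W t S) (S j)) \<partial>?P))"
    proof -
      have mj: "(\<lambda>S. ennreal (f (W t S) (S j))) \<in> borel_measurable ?P" if "j < n" for j
        by (rule measurable_compose[OF fm[OF Wm that] measurable_ennreal])
      have "(\<integral>\<^sup>+ S. (\<Sum>j<n. ennreal (f (W t S) (S j))) \<partial>?P) = (\<Sum>j<n. (\<integral>\<^sup>+ S. ennreal (f (W t S) (S j)) \<partial>?P))"
        by (rule nn_integral_sum) (use mj in auto)
      then show ?thesis by (subst nn_integral_cmult) (auto intro!: borel_measurable_sum mj)
    qed
    also have "\<dots> = ennreal (1 / real n) * (\<Sum>j<n. (\<integral>\<^sup>+ S. ennreal (f (W t S) (S i)) \<partial>?P))"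
      using sym by simp
    also have "\<dots> = (ennreal (1 / real n) * ennreal (real n)) * (\<integral>\<^sup>+ S. ennreal (f (W t S) (S i)) \<partial>?P)"
      by (simp add: ennreal_of_nat_eq_real_of_nat mult.assoc)
    also have "ennreal (1 / real n) * ennreal (real n) = 1"
      using npos by (simp add: ennreal_mult[symmetric])
    finally show ?thesis by simp
  qed
  have mn: "(\<lambda>S. norm (W1 - Wstar S)) \<in> borel_measurable ?P"
    by (rule measurable_compose[OF borel_measurable_diff[OF borel_measurable_const Wstar_meas] borel_measurable_norm])
  have pw: "(\<Sum>t=1..T. eta t * Rt t S) \<le> (norm (W1 - Wstar S))\<^sup>2 + emp_risk f n S (Wstar S) * (\<Sum>t=1..T. eta t)"
    if S: "S \<in> space ?P" for S
  proof -
    interpret gdS f gradf \<beta> n S "Wstar S"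
      by unfold_locales (use grad convex beta_pos smooth npos Wstar_min[OF S] in auto)
    have "(\<Sum>t=1..T. eta t * R (gd_iter gradf eta n W1 S t)) \<le> (norm (W1 - Wstar S))\<^sup>2 + R (Wstar S) * (\<Sum>t=1..T. eta t)"
      by (rule final[OF eta_nonneg eta_le])
    then show ?thesis by (simp add: R_def Rt_def W_def)
  qed
  have "(\<Sum>t=1..T. ennreal (eta t) *
            (\<integral>\<^sup>+ S. ennreal ((norm (gradf (gd_iter gradf eta n W1 S t) (S i)))\<^sup>2) \<partial>?P))
     \<le> (\<Sum>t=1..T. ennreal (eta t) * (\<integral>\<^sup>+ S. ennreal (2 * \<beta> * f (W t S) (S i)) \<partial>?P))"
  proof (intro sum_mono mult_left_mono nn_integral_mono ennreal_leI)
    fix t S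
    show "(norm (gradf (gd_iter gradf eta n W1 S t) (S i)))\<^sup>2 \<le> 2 * \<beta> * f (W t S) (S i)"
      unfolding W_def by (rule self_bound[OF grad smooth f_nonneg beta_pos])
  qed simp
  also have "\<dots> = (\<Sum>t=1..T. ennreal (eta t) * (ennreal (2 * \<beta>) * (\<integral>\<^sup>+ S. ennreal (Rt t S) \<partial>?P)))"
  proof (rule sum.cong[OF refl])
    fix t
    have "(\<integral>\<^sup>+ S. ennreal (2 * \<beta> * f (W t S) (S i)) \<partial>?P) = (\<integral>\<^sup>+ S. ennreal (2 * \<beta>) * ennreal (f (W t S) (S i)) \<partial>?P)"
      using beta_pos by (intro nn_integral_cong) (simp add: ennreal_mult f_nonneg)
    also have "\<dots> = ennreal (2 * \<beta>) * (\<integral>\<^sup>+ S. ennreal (f (W t S) (S i)) \<partial>?P)"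
      by (rule nn_integral_cmult) (rule measurable_compose[OF fm[OF Wm i] measurable_ennreal])
    finally show "ennreal (eta t) * (\<integral>\<^sup>+ S. ennreal (2 * \<beta> * f (W t S) (S i)) \<partial>?P) = ennreal (eta t) * (ennreal (2 * \<beta>) * (\<integral>\<^sup>+ S. ennreal (Rt t S) \<partial>?P))"
      by (simp add: avg)
  qed
  also have "\<dots> = (\<Sum>t=1..T. (\<integral>\<^sup>+ S. ennreal (2 * \<beta> * (eta t * Rt t S)) \<partial>?P))"
  proof (rule sum.cong[OF refl])
    fix t
    have "(\<integral>\<^sup>+ S. ennreal (2 * \<beta> * (eta t * Rt t S)) \<partial>?P) = (\<integral>\<^sup>+ S. (ennreal (eta t) * ennreal (2 * \<beta>)) * ennreal (Rt t S) \<partial>?P)"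
      using beta_pos eta_nonneg[of t] by (intro nn_integral_cong) (simp add: ennreal_mult[symmetric] Rt_def Rnn mult_ac)
    also have "\<dots> = (ennreal (eta t) * ennreal (2 * \<beta>)) * (\<integral>\<^sup>+ S. ennreal (Rt t S) \<partial>?P)"
      by (rule nn_integral_cmult) (unfold Rt_def, rule measurable_compose[OF Rm[OF Wm] measurable_ennreal])
    finally show "ennreal (eta t) * (ennreal (2 * \<beta>) * (\<integral>\<^sup>+ S. ennreal (Rt t S) \<partial>?P)) = (\<integral>\<^sup>+ S. ennreal (2 * \<beta> * (eta t * Rt t S)) \<partial>?P)"
      by (simp add: mult.assoc)
  qed
  also have "\<dots> = (\<integral>\<^sup>+ S. (\<Sum>t=1..T. ennreal (2 * \<beta> * (eta t * Rt t S))) \<partial>?P)"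
    by (rule nn_integral_sum[symmetric]) (unfold Rt_def, intro measurable_compose[OF _ measurable_ennreal] borel_measurable_times borel_measurable_const Rm[OF Wm])
  also have "\<dots> = (\<integral>\<^sup>+ S. ennreal (2 * \<beta> * (\<Sum>t=1..T. eta t * Rt t S)) \<partial>?P)"
    using beta_pos eta_nonneg by (intro nn_integral_cong) (simp add: sum_distrib_left Rt_def Rnn)
  also have "\<dots> \<le> (\<integral>\<^sup>+ S. ennreal (2 * \<beta> * (norm (W1 - Wstar S))\<^sup>2) + ennreal (2 * \<beta> * (\<Sum>t=1..T. eta t) * emp_risk f n S (Wstar S)) \<partial>?P)"
  proof (rule nn_integral_mono)
    fix S assume S: "S \<in> space ?P"
    have "2 * \<beta> * (\<Sum>t=1..T. eta t * Rt t S) \<le> 2 * \<beta> * ((norm (W1 - Wstar S))\<^sup>2 + emp_risk f n S (Wstar S) * (\<Sum>t=1..T. eta t))"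
      using pw[OF S] beta_pos by simp
    then have "ennreal (2 * \<beta> * (\<Sum>t=1..T. eta t * Rt t S)) \<le> ennreal (2 * \<beta> * (norm (W1 - Wstar S))\<^sup>2 + (2 * \<beta> * (\<Sum>t=1..T. eta t)) * emp_risk f n S (Wstar S))"
      by (intro ennreal_leI) (simp add: algebra_simps)
    also have "\<dots> = ennreal (2 * \<beta> * (norm (W1 - Wstar S))\<^sup>2) + ennreal (2 * \<beta> * (\<Sum>t=1..T. eta t) * emp_risk f n S (Wstar S))"
      using beta_pos eta_nonneg by (intro ennreal_plus) (auto simp: Rnn sum_nonneg)
    finally show "ennreal (2 * \<beta> * (\<Sum>t=1..T. eta t * Rt t S)) \<le> ennreal (2 * \<beta> * (norm (W1 - Wstar S))\<^sup>2) + ennreal (2 * \<beta> * (\<Sum>t=1..T. eta t) * emp_risk f n S (Wstar S))" .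
  qed
  also have "\<dots> = (\<integral>\<^sup>+ S. ennreal (2 * \<beta> * (norm (W1 - Wstar S))\<^sup>2) \<partial>?P) + (\<integral>\<^sup>+ S. ennreal (2 * \<beta> * (\<Sum>t=1..T. eta t) * emp_risk f n S (Wstar S)) \<partial>?P)"
  proof (rule nn_integral_add)
    have "(\<lambda>S. 2 * \<beta> * (norm (W1 - Wstar S))\<^sup>2) \<in> borel_measurable ?P"
      by (rule borel_measurable_times[OF borel_measurable_const borel_measurable_power[OF mn]])
    then show "(\<lambda>S. ennreal (2 * \<beta> * (norm (W1 - Wstar S))\<^sup>2)) \<in> borel_measurable ?P"
      by (rule measurable_compose[OF _ measurable_ennreal])
    have "(\<lambda>S. 2 * \<beta> * (\<Sum>t=1..T. eta t) * emp_risk f n S (Wstar S)) \<in> borel_measurable ?P"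
      by (intro borel_measurable_times borel_measurable_const Rm Wstar_meas)
    then show "(\<lambda>S. ennreal (2 * \<beta> * (\<Sum>t=1..T. eta t) * emp_risk f n S (Wstar S))) \<in> borel_measurable ?P"
      by (rule measurable_compose[OF _ measurable_ennreal])
  qed
  also have "\<dots> = ennreal (2 * \<beta>) * (\<integral>\<^sup>+ S. ennreal ((norm (W1 - Wstar S))\<^sup>2) \<partial>?P) + ennreal (2 * \<beta> * (\<Sum>t=1..T. eta t)) * (\<integral>\<^sup>+ S. ennreal (emp_risk f n S (Wstar S)) \<partial>?P)"
  proof -
    have m1: "(\<lambda>S. ennreal ((norm (W1 - Wstar S))\<^sup>2)) \<in> borel_measurable ?P"
      by (rule measurable_compose[OF borel_measurable_power[OF mn] measurable_ennreal])
    have m2: "(\<lambda>S. ennreal (emp_risk f n S (Wstar S))) \<in> borel_measurable ?P"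
      by (rule measurable_compose[OF Rm[OF Wstar_meas] measurable_ennreal])
    have e1: "(\<integral>\<^sup>+ S. ennreal (2 * \<beta> * (norm (W1 - Wstar S))\<^sup>2) \<partial>?P) = (\<integral>\<^sup>+ S. ennreal (2 * \<beta>) * ennreal ((norm (W1 - Wstar S))\<^sup>2) \<partial>?P)"
      using beta_pos by (intro nn_integral_cong) (simp add: ennreal_mult)
    have e2: "(\<integral>\<^sup>+ S. ennreal (2 * \<beta> * (\<Sum>t=1..T. eta t) * emp_risk f n S (Wstar S)) \<partial>?P) = (\<integral>\<^sup>+ S. ennreal (2 * \<beta> * (\<Sum>t=1..T. eta t)) * ennreal (emp_risk f n S (Wstar S)) \<partial>?P)"
      using beta_pos eta_nonneg by (intro nn_integral_cong ennreal_mult) (auto simp: Rnn sum_nonneg)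
    show ?thesis unfolding e1 e2 nn_integral_cmult[OF m1] nn_integral_cmult[OF m2] ..
  qed
  also have "\<dots> \<le> ennreal (4 * \<beta>) * (\<integral>\<^sup>+ S. ennreal ((norm (W1 - Wstar S))\<^sup>2) \<partial>?P) + ennreal (8 * \<beta>) * (\<integral>\<^sup>+ S. ennreal (emp_risk f n S (Wstar S)) \<partial>?P) * ennreal (\<Sum>t=1..T. eta t)"
  proof (rule add_mono)
    show "ennreal (2 * \<beta>) * (\<integral>\<^sup>+ S. ennreal ((norm (W1 - Wstar S))\<^sup>2) \<partial>?P) \<le> ennreal (4 * \<beta>) * (\<integral>\<^sup>+ S. ennreal ((norm (W1 - Wstar S))\<^sup>2) \<partial>?P)"
      using beta_pos by (intro mult_right_mono ennreal_leI) auto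
    have sn: "0 \<le> (\<Sum>t=1..T. eta t)" by (rule sum_nonneg) (use eta_nonneg in auto)
    have e8: "ennreal (8 * \<beta>) * ennreal (\<Sum>t=1..T. eta t) = ennreal (8 * \<beta> * (\<Sum>t=1..T. eta t))"
      by (rule ennreal_mult[symmetric]) (use beta_pos sn in auto)
    have "2 * \<beta> * (\<Sum>t=1..T. eta t) \<le> 8 * \<beta> * (\<Sum>t=1..T. eta t)"
      by (rule mult_right_mono) (use beta_pos sn in auto)
    then have le: "ennreal (2 * \<beta> * (\<Sum>t=1..T. eta t)) \<le> ennreal (8 * \<beta>) * ennreal (\<Sum>t=1..T. eta t)"
      unfolding e8 by (rule ennreal_leI)
    have "ennreal (2 * \<beta> * (\<Sum>t=1..T. eta t)) * (\<integral>\<^sup>+ S. ennreal (emp_risk f n S (Wstar S)) \<partial>?P) \<le> (ennreal (8 * \<beta>) * ennreal (\<Sum>t=1..T. eta t)) * (\<integral>\<^sup>+ S. ennreal (emp_risk f n S (Wstar S)) \<partial>?P)"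
      by (rule mult_right_mono[OF le]) simp
    then show "ennreal (2 * \<beta> * (\<Sum>t=1..T. eta t)) * (\<integral>\<^sup>+ S. ennreal (emp_risk f n S (Wstar S)) \<partial>?P) \<le> ennreal (8 * \<beta>) * (\<integral>\<^sup>+ S. ennreal (emp_risk f n S (Wstar S)) \<partial>?P) * ennreal (\<Sum>t=1..T. eta t)"
      by (simp only: mult.assoc mult.commute[of "ennreal (\<Sum>t=1..T. eta t)"])
  qed
  finally show ?thesis .
qed

end
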